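(* Let $H$ be a (complex) Hilbert space, $D\subset H$ a dense subspace, and $\mathcal{A},\mathcal{B}$ linear self-adjoint operators with domain $D$ (i.e. $\mathcal{A},\mathcal{B}:D\subset H\to H$). For $\alpha\in\mathbb{R}$ define $$\mathcal{T}=\begin{pmatrix}\mathcal{A}&\alpha\mathcal{B}\\-\alpha\mathcal{A}&\mathcal{B}\end{pmatrix}:D\times D\subset H\times H\to H\times H.$$ Then $\sigma(\mathcal{T})\cap i\mathbb{R}\subset\{0\}$. *)

theory Defs
  imports "HOL-Analysis.Analysis"
begin

text \<open>Complex inner product spaces (the inner product is conjugate-linear in the
first argument and linear in the second).  The real normed vector space structure
is the one induced by the complex structure.\<close>

class complex_inner = real_normed_vector +
  fixes scaleC :: "complex \<Rightarrow> 'a \<Rightarrow> 'a" (infixr "*\<^sub>C" 75)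
  fixes cinner :: "'a \<Rightarrow> 'a \<Rightarrow> complex"
  assumes scaleC_add_right: "a *\<^sub>C (x + y) = a *\<^sub>C x + a *\<^sub>C y"
    and scaleC_add_left: "(a + b) *\<^sub>C x = a *\<^sub>C x + b *\<^sub>C x"
    and scaleC_scaleC: "a *\<^sub>C (b *\<^sub>C x) = (a * b) *\<^sub>C x"
    and scaleC_one: "1 *\<^sub>C x = x"
    and scaleR_scaleC: "scaleR r x = complex_of_real r *\<^sub>C x"
    and cinner_commute: "cinner x y = cnj (cinner y x)"
    and cinner_add_left: "cinner (x + y) z = cinner x z + cinner y z"
    and cinner_scaleC_left: "cinner (a *\<^sub>C x) y = cnj a * cinner x y"
    and cinner_self_eq_zero: "cinner x x = 0 \<longleftrightarrow> x = 0"
    and norm_eq_sqrt_cinner: "norm x = sqrt (Re (cinner x x))"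

class chilbert = complex_inner + complete_space

instantiation prod :: (complex_inner, complex_inner) complex_inner
begin

definition scaleC_prod_def: "scaleC a p = (scaleC a (fst p), scaleC a (snd p))"
definition cinner_prod_def: "cinner p q = cinner (fst p) (fst q) + cinner (snd p) (snd q)"

lemma cinner_self_real: "cinner (x::'z::complex_inner) x = complex_of_real ((norm x)\<^sup>2)"
proof -
  have "Im (cinner x x) = 0" using cinner_commute[of x x]
    by (metis cnj.sel(2) equation_minus_iff neg_equal_zero)
  moreover have "Re (cinner x x) = (norm x)\<^sup>2"
  proof -
    have "0 \<le> sqrt (Re (cinner x x))" using norm_ge_zero[of x] by (simp only: norm_eq_sqrt_cinner)
    then have "0 \<le> Re (cinner x x)" by simp
    then show ?thesis by (simp add: norm_eq_sqrt_cinner)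
  qed
  ultimately show ?thesis by (simp add: complex_eq_iff)
qed

instance
proof
  fix a b :: complex and x y z :: "'a \<times> 'b" and r :: real
  show "a *\<^sub>C (x + y) = a *\<^sub>C x + a *\<^sub>C y"
    by (simp add: scaleC_prod_def scaleC_add_right)
  show "(a + b) *\<^sub>C x = a *\<^sub>C x + b *\<^sub>C x"
    by (simp add: scaleC_prod_def scaleC_add_left)
  show "a *\<^sub>C (b *\<^sub>C x) = (a * b) *\<^sub>C x"
    by (simp add: scaleC_prod_def scaleC_scaleC)
  show "1 *\<^sub>C x = x" by (simp add: scaleC_prod_def scaleC_one)
  show "r *\<^sub>R x = complex_of_real r *\<^sub>C x"
    by (simp add: scaleC_prod_def scaleR_scaleC scaleR_prod_def)
  show "cinner x y = cnj (cinner y x)"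
    by (simp add: cinner_prod_def cinner_commute[of "fst x"] cinner_commute[of "snd x"])
  show "cinner (x + y) z = cinner x z + cinner y z"
    by (simp add: cinner_prod_def cinner_add_left)
  show "cinner (a *\<^sub>C x) y = cnj a * cinner x y"
    by (simp add: cinner_prod_def scaleC_prod_def cinner_scaleC_left algebra_simps)
  show "(cinner x x = 0) = (x = 0)"
  proof
    assume "cinner x x = 0"
    then have "complex_of_real ((norm (fst x))\<^sup>2 + (norm (snd x))\<^sup>2) = 0"
      by (simp only: cinner_prod_def cinner_self_real of_real_add)
    then have "(norm (fst x))\<^sup>2 + (norm (snd x))\<^sup>2 = 0" by (simp only: of_real_eq_0_iff)
    then show "x = 0"
      by (metis add_nonneg_eq_0_iff norm_eq_zero prod.collapse zero_le_power2 zero_prod_def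
          power_eq_0_iff)
  next
    assume "x = 0" then show "cinner x x = 0"
      using cinner_self_eq_zero[of "0::'a"] cinner_self_eq_zero[of "0::'b"] by (simp add: cinner_prod_def)
  qed
  show "norm x = sqrt (Re (cinner x x))"
    by (simp add: cinner_prod_def cinner_self_real norm_prod_def)
qed

end

definition csubspace :: "'a::complex_inner set \<Rightarrow> bool" where
  "csubspace D \<longleftrightarrow> 0 \<in> D \<and> (\<forall>x\<in>D. \<forall>y\<in>D. x + y \<in> D) \<and> (\<forall>a. \<forall>x\<in>D. a *\<^sub>C x \<in> D)"

text \<open>A linear operator with domain \<open>D\<close> (values outside \<open>D\<close> are irrelevant).\<close>
definition clinear_on :: "'a::complex_inner set \<Rightarrow> ('a \<Rightarrow> 'b::complex_inner) \<Rightarrow> bool" where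
  "clinear_on D T \<longleftrightarrow> (\<forall>x\<in>D. \<forall>y\<in>D. T (x + y) = T x + T y) \<and>
                       (\<forall>a. \<forall>x\<in>D. T (a *\<^sub>C x) = a *\<^sub>C T x)"

definition adj_domain :: "'a::complex_inner set \<Rightarrow> ('a \<Rightarrow> 'a) \<Rightarrow> 'a set" where
  "adj_domain D T = {y. \<exists>z. \<forall>x\<in>D. cinner (T x) y = cinner x z}"

text \<open>Self-adjoint: \<open>T* = T\<close>, i.e. the adjoint has domain exactly \<open>D\<close>
  and agrees with \<open>T\<close> there (equivalently \<open>T\<close> is symmetric on \<open>D\<close>).\<close>
definition self_adjoint_on :: "'a::complex_inner set \<Rightarrow> ('a \<Rightarrow> 'a) \<Rightarrow> bool" where
  "self_adjoint_on D T \<longleftrightarrow> adj_domain D T = D \<and>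
     (\<forall>x\<in>D. \<forall>y\<in>D. cinner (T x) y = cinner x (T y))"

text \<open>Spectrum of an operator \<open>T\<close> with domain \<open>D\<close>: \<open>\<lambda>\<close> is in the resolvent set iff
  \<open>T - \<lambda>\<close> maps \<open>D\<close> bijectively onto the whole space with bounded inverse.\<close>
definition op_spectrum :: "'a::complex_inner set \<Rightarrow> ('a \<Rightarrow> 'a) \<Rightarrow> complex set" where
  "op_spectrum D T = {l. \<not> (bij_betw (\<lambda>x. T x - l *\<^sub>C x) D UNIV \<and>
      (\<exists>C. \<forall>x\<in>D. norm x \<le> C * norm (T x - l *\<^sub>C x)))}"

end

theory Submission
  imports Defs
begin


interpretation cvs: module "scaleC :: complex \<Rightarrow> 'a \<Rightarrow> 'a::complex_inner"
  by unfold_locales (simp_all add: scaleC_add_right scaleC_add_left scaleC_scaleC scaleC_one)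

lemma cinner_add_right: "cinner x (y + z) = cinner x y + cinner x z"
  by (metis cinner_add_left cinner_commute complex_cnj_add)
lemma cinner_scaleC_right: "cinner x (a *\<^sub>C y) = a * cinner x y"
  by (metis cinner_commute cinner_scaleC_left complex_cnj_cnj complex_cnj_mult)
lemma cinner_zero_left[simp]: "cinner 0 y = 0"
  by (metis add_cancel_left_left cinner_add_left add_0)
lemma cinner_zero_right[simp]: "cinner y 0 = 0"
  by (metis cinner_commute cinner_zero_left complex_cnj_zero)
lemma cinner_minus_left: "cinner (- x) y = - cinner x y"
  by (metis cinner_add_left add.right_inverse cinner_zero_left add_eq_0_iff)
lemma cinner_minus_right: "cinner y (- x) = - cinner y x"
  by (metis cinner_commute cinner_minus_left complex_cnj_minus)
lemma cinner_diff_left: "cinner (x - z) y = cinner x y - cinner z y"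
  by (simp only: diff_conv_add_uminus cinner_add_left cinner_minus_left)
lemma cinner_diff_right: "cinner y (x - z) = cinner y x - cinner y z"
  by (simp only: diff_conv_add_uminus cinner_add_right cinner_minus_right)
lemmas cinner_simps = cinner_add_left cinner_add_right cinner_scaleC_left cinner_scaleC_right
  cinner_minus_left cinner_minus_right cinner_diff_left cinner_diff_right

lemma cinner_self: "cinner x x = complex_of_real ((norm x)\<^sup>2)"
  by (rule cinner_self_real)

lemma cinner_scaleR_left: "cinner (r *\<^sub>R x) y = complex_of_real r * cinner x y"
  by (simp add: scaleR_scaleC cinner_scaleC_left)
lemma cinner_scaleR_right: "cinner y (r *\<^sub>R x) = complex_of_real r * cinner y x"
  by (simp add: scaleR_scaleC cinner_scaleC_right)

lemma norm_sq: "(norm x)\<^sup>2 = Re (cinner x x)"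
  by (simp add: cinner_self)

lemma Re_cinner_swap: "Re (cinner y x) = Re (cinner x y)"
  by (metis cinner_commute complex_cnj_cnj cnj.sel(1))

lemma norm_add_sq: "(norm (x + y))\<^sup>2 = (norm x)\<^sup>2 + (norm y)\<^sup>2 + 2 * Re (cinner x y)"
  unfolding norm_sq by (simp add: cinner_simps Re_cinner_swap[of y x])

lemma norm_diff_sq: "(norm (x - y))\<^sup>2 = (norm x)\<^sup>2 + (norm y)\<^sup>2 - 2 * Re (cinner x y)"
  unfolding norm_sq by (simp add: cinner_simps Re_cinner_swap[of y x])

lemma Im_cinner_self[simp]: "Im (cinner x x) = 0"
  by (simp add: cinner_self)

lemma parallelogram: "(norm ((x::'a::complex_inner) + y))\<^sup>2 + (norm (x - y))\<^sup>2 = 2 * (norm x)\<^sup>2 + 2 * (norm y)\<^sup>2"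
  by (simp only: norm_add_sq norm_diff_sq)

lemma norm_scaleC: "norm (a *\<^sub>C x) = cmod a * norm x"
proof -
  have "(norm (a *\<^sub>C x))\<^sup>2 = Re (cnj a * (a * cinner x x))" unfolding norm_sq by (simp add: cinner_simps)
  also have "\<dots> = ((Re a)\<^sup>2 + (Im a)\<^sup>2) * (norm x)\<^sup>2"
    unfolding cinner_self by (simp add: algebra_simps power2_eq_square)
  also have "\<dots> = (cmod a)\<^sup>2 * (norm x)\<^sup>2" by (simp add: cmod_power2)
  finally have "(norm (a *\<^sub>C x))\<^sup>2 = (cmod a * norm x)\<^sup>2" by (simp add: power_mult_distrib)
  then show ?thesis
    by (metis norm_ge_zero mult_nonneg_nonneg power2_eq_imp_eq)
qed

lemma cauchy_schwarz: "cmod (cinner x y) \<le> norm x * norm y"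
proof (cases "y = 0")
  case True then show ?thesis by simp
next
  case False
  define c where "c = cinner y x"
  define n where "n = (norm y)\<^sup>2"
  have n: "n > 0" using False by (simp add: n_def)
  define t where "t = c / complex_of_real n"
  have "0 \<le> (norm (x - t *\<^sub>C y))\<^sup>2" by simp
  also have "\<dots> = (norm x)\<^sup>2 + ((cmod t)\<^sup>2 * n + 2 * Re (- t * cnj c))"
    using cinner_commute[of x y]
    by (simp add: norm_diff_sq norm_scaleC cinner_simps power_mult_distrib n_def c_def)
  also have "(cmod t)\<^sup>2 * n + 2 * Re (- t * cnj c) = - (cmod c)\<^sup>2 / n"
    using n cmod_power2[of c] unfolding t_def
    by (simp add: norm_divide power_divide cmod_power2 field_simps power2_eq_square)
  finally have "(cmod c)\<^sup>2 / n \<le> (norm x)\<^sup>2" by simp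
  then have "(cmod c)\<^sup>2 \<le> (norm x)\<^sup>2 * (norm y)\<^sup>2" using n by (simp add: n_def pos_divide_le_eq)
  then have "(cmod c)\<^sup>2 \<le> (norm x * norm y)\<^sup>2" by (simp add: power_mult_distrib)
  then have "cmod c \<le> norm x * norm y"
    by (rule power2_le_imp_le) simp
  then show ?thesis unfolding c_def by (metis cinner_commute complex_mod_cnj)
qed

lemma bounded_linear_cinner_left: "bounded_linear (\<lambda>x. cinner x w)"
  by (rule bounded_linear_intro[where K="norm w"])
     (auto simp: cinner_add_left cinner_scaleR_left scaleR_conv_of_real cauchy_schwarz)

lemma bounded_linear_cinner_right: "bounded_linear (\<lambda>x. cinner w x)"
  by (rule bounded_linear_intro[where K="norm w"])
     (auto simp: cinner_add_right cinner_scaleR_right scaleR_conv_of_real,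
      metis cauchy_schwarz mult.commute)

lemma tendsto_cinner_left: "(f \<longlongrightarrow> a) F \<Longrightarrow> ((\<lambda>n. cinner (f n) w) \<longlongrightarrow> cinner a w) F"
  by (rule bounded_linear.tendsto[OF bounded_linear_cinner_left])

lemma tendsto_cinner_right: "(f \<longlongrightarrow> a) F \<Longrightarrow> ((\<lambda>n. cinner w (f n)) \<longlongrightarrow> cinner w a) F"
  by (rule bounded_linear.tendsto[OF bounded_linear_cinner_right])

lemma dense_zero:
  assumes "closure D = UNIV" and "\<forall>z\<in>D. cinner z w = 0"
  shows "w = 0"
proof -
  have "w \<in> closure D" using assms(1) by simp
  then obtain s where s: "\<forall>n. s n \<in> D" "s \<longlonglongrightarrow> w" using closure_sequential[of w D] by blast
  have "(\<lambda>n. cinner (s n) w) \<longlonglongrightarrow> cinner w w" by (rule tendsto_cinner_left[OF s(2)])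
  moreover have "(\<lambda>n. cinner (s n) w) = (\<lambda>n. 0)" using s(1) assms(2) by auto
  ultimately have "cinner w w = 0" using LIMSEQ_unique[of _ "cinner w w" 0] by simp
  then show ?thesis by (simp add: cinner_self_eq_zero)
qed

lemma sa_closed:
  assumes dense: "closure D = UNIV" and sa: "self_adjoint_on D A"
    and xD: "\<forall>n. x n \<in> D" and xl: "x \<longlonglongrightarrow> x0" and al: "(\<lambda>n. A (x n)) \<longlonglongrightarrow> a"
  shows "x0 \<in> D \<and> A x0 = a"
proof -
  have eq: "cinner (A z) x0 = cinner z a" if z: "z \<in> D" for z
  proof -
    have "(\<lambda>n. cinner (A z) (x n)) \<longlonglongrightarrow> cinner (A z) x0" by (rule tendsto_cinner_right[OF xl])
    moreover have "(\<lambda>n. cinner (A z) (x n)) = (\<lambda>n. cinner z (A (x n)))"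
      using sa z xD by (auto simp: self_adjoint_on_def)
    moreover have "(\<lambda>n. cinner z (A (x n))) \<longlonglongrightarrow> cinner z a" by (rule tendsto_cinner_right[OF al])
    ultimately show ?thesis using LIMSEQ_unique by auto
  qed
  then have "x0 \<in> adj_domain D A" unfolding adj_domain_def by blast
  then have x0D: "x0 \<in> D" using sa by (simp add: self_adjoint_on_def)
  have "\<forall>z\<in>D. cinner z (A x0 - a) = 0"
    using eq sa x0D by (auto simp: self_adjoint_on_def cinner_diff_right)
  then have "A x0 - a = 0" by (rule dense_zero[OF dense])
  then show ?thesis using x0D by simp
qed



lemma quad_zero:
  fixes a b :: real
  assumes "\<forall>t. 2 * t * a \<le> t\<^sup>2 * b" and "b \<ge> 0"
  shows "a = 0"
proof -
  define t where "t = a / (b + 1)"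
  have bp: "b + 1 > 0" using assms(2) by simp
  have "2 * t * a \<le> t\<^sup>2 * b" using assms(1) by blast
  then have ineq: "2 * t * a * (b+1)\<^sup>2 \<le> t\<^sup>2 * b * (b+1)\<^sup>2" by (rule mult_right_mono) simp
  have tb: "t * (b + 1) = a" using bp by (simp add: t_def)
  have "2 * t * a * (b+1)\<^sup>2 = 2 * (t * (b + 1)) * a * (b + 1)"
    by (simp add: power2_eq_square algebra_simps)
  also have "\<dots> = 2 * a * a * (b + 1)" by (simp only: tb)
  finally have e1: "2 * t * a * (b+1)\<^sup>2 = 2 * a * a * (b + 1)" .
  have "t\<^sup>2 * b * (b+1)\<^sup>2 = (t * (b + 1)) * (t * (b + 1)) * b"
    by (simp add: power2_eq_square algebra_simps)
  also have "\<dots> = a * a * b" by (simp only: tb)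
  finally have e2: "t\<^sup>2 * b * (b+1)\<^sup>2 = a * a * b" .
  have "2 * a * a * (b + 1) \<le> a * a * b" using ineq unfolding e1 e2 .
  then have c0: "a * a * (b + 2) \<le> 0" by (simp add: algebra_simps)
  have b2: "b + 2 > 0" using assms(2) by simp
  have "a * a * (b + 2) \<le> 0 * (b + 2)" using c0 by simp
  then have "a * a \<le> 0" using b2 by (rule mult_right_le_imp_le)
  then have "a * a = 0" using zero_le_square[of a] by linarith
  then show ?thesis by simp
qed

lemma csub_lin:
  assumes "csubspace E" "u \<in> E" "v \<in> E"
  shows "a *\<^sub>C u + b *\<^sub>C v \<in> E"
  using assms unfolding csubspace_def by blast

lemma clin_lin:
  assumes "csubspace E" "clinear_on E S" "u \<in> E" "v \<in> E"
  shows "S (a *\<^sub>C u + b *\<^sub>C v) = a *\<^sub>C S u + b *\<^sub>C S v"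
  using assms unfolding csubspace_def clinear_on_def by simp

lemma diff_as_lin: "u - v = 1 *\<^sub>C u + (-1) *\<^sub>C v"
  by (simp add: scaleC_one)

lemma scaleR_as_lin: "u + t *\<^sub>R v = 1 *\<^sub>C u + complex_of_real t *\<^sub>C v"
  by (simp add: scaleC_one scaleR_scaleC)

lemma closed_range_surj:
  fixes S :: "'b::{complex_inner,complete_space} \<Rightarrow> 'b"
  assumes sub: "csubspace E" and lin: "clinear_on E S"
   and bound: "\<forall>u\<in>E. norm u \<le> C * norm (S u)"
   and closed: "\<And>u u0 g. (\<forall>n. u n \<in> E) \<Longrightarrow> u \<longlonglongrightarrow> u0 \<Longrightarrow> (\<lambda>n. S (u n)) \<longlonglongrightarrow> g
                 \<Longrightarrow> u0 \<in> E \<and> S u0 = g"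
   and adj: "\<And>w. \<forall>v\<in>E. cinner (S v) w = 0 \<Longrightarrow> w = 0"
  shows "S ` E = UNIV"
proof -
  have diffE: "u - v \<in> E" if "u \<in> E" "v \<in> E" for u v
    unfolding diff_as_lin by (rule csub_lin[OF sub that])
  have diffS: "S (u - v) = S u - S v" if "u \<in> E" "v \<in> E" for u v
    unfolding diff_as_lin by (rule clin_lin[OF sub lin that])
  have addE: "u + t *\<^sub>R v \<in> E" if "u \<in> E" "v \<in> E" for u v t
    unfolding scaleR_as_lin by (rule csub_lin[OF sub that])
  have addS: "S (u + t *\<^sub>R v) = S u + t *\<^sub>R S v" if "u \<in> E" "v \<in> E" for u v t
    unfolding scaleR_as_lin by (rule clin_lin[OF sub lin that])
  have scE: "a *\<^sub>C v \<in> E" if "v \<in> E" for v a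
    using sub that unfolding csubspace_def by blast
  have scS: "S (a *\<^sub>C v) = a *\<^sub>C S v" if "v \<in> E" for v a
    using lin that unfolding clinear_on_def by blast
  have zE: "0 \<in> E" using sub unfolding csubspace_def by blast
  show ?thesis
  proof (rule set_eqI, rule iffI)
    fix f :: 'b assume "f \<in> UNIV"
    define R where "R = S ` E"
    define d where "d = Inf ((\<lambda>r. norm (f - r)) ` R)"
    have Rne: "(\<lambda>r. norm (f - r)) ` R \<noteq> {}" using zE unfolding R_def by blast
    have bdd: "bdd_below ((\<lambda>r. norm (f - r)) ` R)" by (rule bdd_belowI[of _ 0]) auto
    have dle: "d \<le> norm (f - r)" if "r \<in> R" for r
      unfolding d_def by (rule cInf_lower) (use that bdd in auto)
    have d0: "d \<ge> 0" unfolding d_def by (rule cInf_greatest[OF Rne]) auto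
    have ex: "\<forall>n. \<exists>r. r \<in> R \<and> (norm (f - r))\<^sup>2 < d\<^sup>2 + inverse (real (Suc n))"
    proof
      fix n
      have "d = sqrt (d\<^sup>2)" using d0 by simp
      also have "sqrt (d\<^sup>2) < sqrt (d\<^sup>2 + inverse (real (Suc n)))"
        by (rule real_sqrt_less_mono) simp
      finally have "d < sqrt (d\<^sup>2 + inverse (real (Suc n)))" .
      then have "Inf ((\<lambda>r. norm (f - r)) ` R) < sqrt (d\<^sup>2 + inverse (real (Suc n)))"
        unfolding d_def .
      then obtain r where r: "r \<in> R" "norm (f - r) < sqrt (d\<^sup>2 + inverse (real (Suc n)))"
        using cInf_lessD[OF Rne] by blast
      then have "(norm (f - r))\<^sup>2 < (sqrt (d\<^sup>2 + inverse (real (Suc n))))\<^sup>2"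
        by (intro power_strict_mono) auto
      then have "(norm (f - r))\<^sup>2 < d\<^sup>2 + inverse (real (Suc n))" by simp
      then show "\<exists>r. r \<in> R \<and> (norm (f - r))\<^sup>2 < d\<^sup>2 + inverse (real (Suc n))" using r by blast
    qed
    obtain r where rr: "\<forall>n. r n \<in> R \<and> (norm (f - r n))\<^sup>2 < d\<^sup>2 + inverse (real (Suc n))"
      using choice[OF ex] by (elim exE)
    then have rR: "\<forall>n. r n \<in> R"
      and rn: "\<forall>n. (norm (f - r n))\<^sup>2 < d\<^sup>2 + inverse (real (Suc n))" by auto
    have para: "(norm (r m - r n))\<^sup>2 \<le> 2 * inverse (real (Suc n)) + 2 * inverse (real (Suc m))" for m n
    proof -
      obtain um un where um: "um \<in> E" "r m = S um" and un: "un \<in> E" "r n = S un"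
        using rR unfolding R_def by blast
      define mid where "mid = S un + (1/2) *\<^sub>R (S um - S un)"
      have "mid = S (un + (1/2) *\<^sub>R (um - un))"
        using addS[OF un(1) diffE[OF um(1) un(1)], of "1/2"] diffS[OF um(1) un(1)]
        unfolding mid_def by simp
      moreover have "un + (1/2) *\<^sub>R (um - un) \<in> E" using addE[OF un(1) diffE[OF um(1) un(1)]] .
      ultimately have "mid \<in> R" unfolding R_def by blast
      then have dm: "d \<le> norm (f - mid)" by (rule dle)
      have e1: "(f - r n) + (f - r m) = 2 *\<^sub>R (f - mid)" unfolding mid_def um un by (simp add: algebra_simps scaleR_2)
      have e2: "(f - r n) - (f - r m) = r m - r n" by simp
      have pl: "(norm ((f - r n) + (f - r m)))\<^sup>2 + (norm ((f - r n) - (f - r m)))\<^sup>2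
             = 2 * (norm (f - r n))\<^sup>2 + 2 * (norm (f - r m))\<^sup>2"
        by (rule parallelogram)
      have "(norm ((f - r n) + (f - r m)))\<^sup>2 = 4 * (norm (f - mid))\<^sup>2"
        unfolding e1 by (simp add: power_mult_distrib)
      moreover have "4 * d\<^sup>2 \<le> 4 * (norm (f - mid))\<^sup>2"
        using dm d0 by (simp add: power_mono)
      ultimately show ?thesis using pl[unfolded e2] rn[rule_format, of n] rn[rule_format, of m] by linarith
    qed
    have small: "\<exists>N. \<forall>m\<ge>N. \<forall>n\<ge>N. norm (r m - r n) < e" if e: "e > 0" for e
    proof -
      have "e\<^sup>2 / 4 > 0" using e by simp
      then obtain N where N: "inverse (real (Suc N)) < e\<^sup>2 / 4"
        using reals_Archimedean by blast
      show ?thesis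
      proof (intro exI allI impI)
        fix m n assume mn: "N \<le> m" "N \<le> n"
        have "inverse (real (Suc m)) \<le> inverse (real (Suc N))"
          using mn by (simp add: le_imp_inverse_le)
        moreover have "inverse (real (Suc n)) \<le> inverse (real (Suc N))"
          using mn by (simp add: le_imp_inverse_le)
        ultimately have "(norm (r m - r n))\<^sup>2 < e\<^sup>2" using para[of m n] N by linarith
        then show "norm (r m - r n) < e" by (rule power2_less_imp_less) (use e in simp)
      qed
    qed
    have exu: "\<forall>n. \<exists>v. v \<in> E \<and> S v = r n" using rR unfolding R_def image_iff by metis
    obtain u where "\<forall>n. u n \<in> E \<and> S (u n) = r n" using choice[OF exu] by (elim exE)
    then have uE: "\<forall>n. u n \<in> E" and ur: "\<forall>n. S (u n) = r n" by auto
    have "Cauchy r"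
    proof (rule metric_CauchyI)
      fix e :: real assume "e > 0"
      then obtain N where "\<forall>m\<ge>N. \<forall>n\<ge>N. norm (r m - r n) < e" using small by blast
      then show "\<exists>M. \<forall>m\<ge>M. \<forall>n\<ge>M. dist (r m) (r n) < e" by (auto simp: dist_norm)
    qed
    then obtain g where rg: "r \<longlonglongrightarrow> g" using Cauchy_convergent_iff convergent_def by blast
    have "Cauchy u"
    proof (rule metric_CauchyI)
      fix e :: real assume e: "e > 0"
      obtain N where N: "\<forall>m\<ge>N. \<forall>n\<ge>N. norm (r m - r n) < e / (\<bar>C\<bar> + 1)"
        using small[of "e / (\<bar>C\<bar> + 1)"] e by auto
      show "\<exists>M. \<forall>m\<ge>M. \<forall>n\<ge>M. dist (u m) (u n) < e"
      proof (intro exI allI impI)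
        fix m n assume mn: "N \<le> m" "N \<le> n"
        have "norm (u m - u n) \<le> C * norm (S (u m - u n))"
          using bound diffE[OF uE[rule_format, of m] uE[rule_format, of n]] by blast
        also have "S (u m - u n) = r m - r n"
          using diffS[OF uE[rule_format, of m] uE[rule_format, of n]] ur by simp
        finally have "norm (u m - u n) \<le> C * norm (r m - r n)" .
        also have "\<dots> \<le> \<bar>C\<bar> * norm (r m - r n)" by (simp add: mult_right_mono)
        also have "\<dots> \<le> \<bar>C\<bar> * (e / (\<bar>C\<bar> + 1))"
        proof (rule mult_left_mono)
          show "norm (r m - r n) \<le> e / (\<bar>C\<bar> + 1)" using N mn less_imp_le by blast
        qed simp
        also have "\<dots> < e" using e by (simp add: field_simps)
        finally show "dist (u m) (u n) < e" by (simp add: dist_norm)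
      qed
    qed
    then obtain u0 where uu: "u \<longlonglongrightarrow> u0" using Cauchy_convergent_iff convergent_def by blast
    have "(\<lambda>n. S (u n)) \<longlonglongrightarrow> g" using rg ur by simp
    then have u0: "u0 \<in> E" "S u0 = g" using closed[OF uE uu] by auto
    have fg: "(norm (f - g))\<^sup>2 \<le> d\<^sup>2"
    proof (rule LIMSEQ_le)
      show "(\<lambda>n. (norm (f - r n))\<^sup>2) \<longlonglongrightarrow> (norm (f - g))\<^sup>2"
        by (intro tendsto_intros rg)
      show "(\<lambda>n. d\<^sup>2 + inverse (real (Suc n))) \<longlonglongrightarrow> d\<^sup>2"
        using tendsto_add[OF tendsto_const LIMSEQ_inverse_real_of_nat] by simp
      show "\<exists>N. \<forall>n\<ge>N. (norm (f - r n))\<^sup>2 \<le> d\<^sup>2 + inverse (real (Suc n))"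
        using rn less_imp_le by blast
    qed
    define w where "w = f - g"
    have re0: "Re (cinner w (S v)) = 0" if v: "v \<in> E" for v
    proof (rule quad_zero)
      show "0 \<le> (norm (S v))\<^sup>2" by simp
      show "\<forall>t. 2 * t * Re (cinner w (S v)) \<le> t\<^sup>2 * (norm (S v))\<^sup>2"
      proof
        fix t :: real
        have "g + t *\<^sub>R S v = S (u0 + t *\<^sub>R v)" using addS[OF u0(1) v] u0 by simp
        then have "g + t *\<^sub>R S v \<in> R" using addE[OF u0(1) v] unfolding R_def by blast
        then have "d \<le> norm (f - (g + t *\<^sub>R S v))" by (rule dle)
        then have "d\<^sup>2 \<le> (norm (w - t *\<^sub>R S v))\<^sup>2" using d0 unfolding w_def
          by (simp add: power_mono algebra_simps)
        also have "\<dots> = (norm w)\<^sup>2 + t\<^sup>2 * (norm (S v))\<^sup>2 - 2 * t * Re (cinner w (S v))"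
          by (simp add: norm_diff_sq cinner_scaleR_right power_mult_distrib)
        finally show "2 * t * Re (cinner w (S v)) \<le> t\<^sup>2 * (norm (S v))\<^sup>2"
          using fg unfolding w_def by linarith
      qed
    qed
    have "\<forall>v\<in>E. cinner (S v) w = 0"
    proof
      fix v assume v: "v \<in> E"
      have a: "Re (cinner w (S v)) = 0" by (rule re0[OF v])
      have "Re (cinner w (S (\<i> *\<^sub>C v))) = 0" by (rule re0[OF scE[OF v]])
      then have b: "Im (cinner w (S v)) = 0" by (simp add: scS[OF v] cinner_scaleC_right)
      have "cinner w (S v) = 0" using a b by (simp add: complex_eq_iff)
      then show "cinner (S v) w = 0" by (metis cinner_commute complex_cnj_zero)
    qed
    then have "w = 0" by (rule adj)
    then show "f \<in> S ` E" using u0 unfolding w_def by auto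
  qed simp
qed



lemma key_identity:
  fixes x y :: "'h::complex_inner" and \<alpha> :: real
  assumes "Im (cinner x (A x)) = 0" "Im (cinner y (B y)) = 0" "Re l = 0"
  shows "Im (cinner x ((A x + complex_of_real \<alpha> *\<^sub>C B y - l *\<^sub>C x)
              - complex_of_real \<alpha> *\<^sub>C (- (complex_of_real \<alpha> *\<^sub>C A x) + B y - l *\<^sub>C y))
           + cinner y (complex_of_real \<alpha> *\<^sub>C (A x + complex_of_real \<alpha> *\<^sub>C B y - l *\<^sub>C x)
              + (- (complex_of_real \<alpha> *\<^sub>C A x) + B y - l *\<^sub>C y)))
         = - Im l * ((norm x)\<^sup>2 + (norm y)\<^sup>2)"
proof -
  have yx: "cinner y x = cnj (cinner x y)" by (rule cinner_commute)
  show ?thesis using assms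
    by (simp add: cinner_simps cinner_self yx algebra_simps)
qed

lemma adj_identity:
  fixes w1 w2 :: "'h::complex_inner" and \<alpha> :: real
  assumes "Re l = 0"
  shows "Im (cinner (w1 - complex_of_real \<alpha> *\<^sub>C w2) (cnj l *\<^sub>C w1)
           + cinner (complex_of_real \<alpha> *\<^sub>C w1 + w2) (cnj l *\<^sub>C w2))
         = - Im l * ((norm w1)\<^sup>2 + (norm w2)\<^sup>2)"
proof -
  have yx: "cinner w2 w1 = cnj (cinner w1 w2)" by (rule cinner_commute)
  show ?thesis using assms
    by (simp add: cinner_simps cinner_self yx algebra_simps)
qed

lemma sa_real:
  assumes "self_adjoint_on D A" "x \<in> D"
  shows "Im (cinner x (A x)) = 0"
proof -
  have "cinner (A x) x = cinner x (A x)" using assms by (simp add: self_adjoint_on_def)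
  moreover have "cinner (A x) x = cnj (cinner x (A x))" by (rule cinner_commute)
  ultimately have "cnj (cinner x (A x)) = cinner x (A x)" by simp
  then show ?thesis by (metis cnj.sel(2) equation_minus_iff neg_equal_zero)
qed

lemma tendsto_scaleC: "((f::_\<Rightarrow>'a::complex_inner) \<longlongrightarrow> x) F \<Longrightarrow> ((\<lambda>n. c *\<^sub>C f n) \<longlongrightarrow> c *\<^sub>C x) F"
proof -
  have "bounded_linear (\<lambda>x::'a::complex_inner. c *\<^sub>C x)"
    by (rule bounded_linear_intro[where K="cmod c"])
       (auto simp: scaleC_add_right scaleR_scaleC scaleC_scaleC norm_scaleC mult.commute)
  then show "(f \<longlongrightarrow> x) F \<Longrightarrow> ((\<lambda>n. c *\<^sub>C f n) \<longlongrightarrow> c *\<^sub>C x) F"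
    by (rule bounded_linear.tendsto)
qed

lemma scaleC_Pair: "c *\<^sub>C (x, y) = (c *\<^sub>C x, c *\<^sub>C y)"
  by (simp add: scaleC_prod_def)

lemma cinner_Pair: "cinner (x, y) (u, v) = cinner x u + cinner y v"
  by (simp add: cinner_prod_def)



theorem lemma15:
  fixes D :: "'h::chilbert set" and A B :: "'h \<Rightarrow> 'h" and \<alpha> :: real
  assumes "csubspace D" and "closure D = UNIV"
    and "clinear_on D A" and "clinear_on D B"
    and "self_adjoint_on D A" and "self_adjoint_on D B"
  shows "op_spectrum (D \<times> D)
           (\<lambda>(x, y). (A x + complex_of_real \<alpha> *\<^sub>C B y,
                      - (complex_of_real \<alpha> *\<^sub>C A x) + B y))
         \<inter> {l. Re l = 0} \<subseteq> {0}"
proof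
  note subD = assms(1) and dense = assms(2) and linA = assms(3) and linB = assms(4)
    and saA = assms(5) and saB = assms(6)
  define a where "a = complex_of_real \<alpha>"
  define T where "T = (\<lambda>(x::'h, y::'h). (A x + a *\<^sub>C B y, - (a *\<^sub>C A x) + B y))"
  fix l assume l: "l \<in> op_spectrum (D \<times> D) (\<lambda>(x, y). (A x + complex_of_real \<alpha> *\<^sub>C B y,
                      - (complex_of_real \<alpha> *\<^sub>C A x) + B y)) \<inter> {l. Re l = 0}"
  then have lsp: "l \<in> op_spectrum (D \<times> D) T" and Rel: "Re l = 0"
    unfolding T_def a_def by auto
  show "l \<in> {0}"
  proof (rule ccontr)
    assume "l \<notin> {0}"
    then have Iml: "Im l \<noteq> 0" using Rel by (auto simp: complex_eq_iff)
    define S where "S = (\<lambda>u. T u - l *\<^sub>C u)"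
    have Spair: "S (x, y) = (A x + a *\<^sub>C B y - l *\<^sub>C x, - (a *\<^sub>C A x) + B y - l *\<^sub>C y)" for x y
      by (simp add: S_def T_def scaleC_Pair)
    have cnja: "cnj a = a" by (simp add: a_def)
    have A_add: "A (x + y) = A x + A y" if "x \<in> D" "y \<in> D" for x y
      using linA that by (simp add: clinear_on_def)
    have A_sc: "A (c *\<^sub>C x) = c *\<^sub>C A x" if "x \<in> D" for x c
      using linA that by (simp add: clinear_on_def)
    have B_add: "B (x + y) = B x + B y" if "x \<in> D" "y \<in> D" for x y
      using linB that by (simp add: clinear_on_def)
    have B_sc: "B (c *\<^sub>C x) = c *\<^sub>C B x" if "x \<in> D" for x c
      using linB that by (simp add: clinear_on_def)
    have D0: "0 \<in> D" using subD by (simp add: csubspace_def)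
    have A0: "A 0 = 0" using A_sc[OF D0, of 0] by simp
    have B0: "B 0 = 0" using B_sc[OF D0, of 0] by simp
    have sub: "csubspace (D \<times> D)"
      using subD by (auto simp: csubspace_def scaleC_prod_def zero_prod_def)
    have lin: "clinear_on (D \<times> D) S"
      unfolding clinear_on_def
    proof (intro conjI ballI allI)
      fix u v assume "u \<in> D \<times> D" "v \<in> D \<times> D"
      then obtain x1 y1 x2 y2 where uv: "u = (x1, y1)" "v = (x2, y2)" "x1 \<in> D" "y1 \<in> D" "x2 \<in> D" "y2 \<in> D"
        by auto
      show "S (u + v) = S u + S v"
        unfolding uv(1,2) by (simp add: Spair A_add B_add uv algebra_simps)
    next
      fix c u assume "u \<in> D \<times> D"
      then obtain x y where u: "u = (x, y)" "x \<in> D" "y \<in> D" by auto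
      show "S (c *\<^sub>C u) = c *\<^sub>C S u"
        unfolding u(1) by (simp add: Spair scaleC_Pair A_sc B_sc u algebra_simps)
    qed
    define K where "K = 2 * (1 + \<bar>\<alpha>\<bar>) / \<bar>Im l\<bar>"
    have bound: "\<forall>u\<in>D \<times> D. norm u \<le> K * norm (S u)"
    proof
      fix u assume "u \<in> D \<times> D"
      then obtain x y where u: "u = (x, y)" "x \<in> D" "y \<in> D" by auto
      define f1 where "f1 = A x + a *\<^sub>C B y - l *\<^sub>C x"
      define f2 where "f2 = - (a *\<^sub>C A x) + B y - l *\<^sub>C y"
      define P where "P = f1 - a *\<^sub>C f2"
      define Q where "Q = a *\<^sub>C f1 + f2"
      have Su: "S u = (f1, f2)" unfolding u(1) f1_def f2_def by (rule Spair)
      define nu where "nu = norm u"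
      define ns where "ns = norm (S u)"
      have nu0: "nu \<ge> 0" and ns0: "ns \<ge> 0" by (simp_all add: nu_def ns_def)
      have id: "Im (cinner x P + cinner y Q) = - Im l * ((norm x)\<^sup>2 + (norm y)\<^sup>2)"
        unfolding P_def Q_def f1_def f2_def a_def
        by (rule key_identity[where A=A and B=B and x=x and y=y, OF sa_real[OF saA u(2)] sa_real[OF saB u(3)] Rel])
      have nsq: "(norm x)\<^sup>2 + (norm y)\<^sup>2 = nu\<^sup>2"
        unfolding nu_def u(1) by (simp add: norm_Pair)
      have nx: "norm x \<le> nu" and ny: "norm y \<le> nu"
        unfolding nu_def u(1) by (rule norm_fst_le, rule norm_snd_le)
      have nf1: "norm f1 \<le> ns" and nf2: "norm f2 \<le> ns"
        unfolding ns_def Su by (rule norm_fst_le, rule norm_snd_le)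
      have ca: "cmod a = \<bar>\<alpha>\<bar>" by (simp add: a_def)
      have nP: "norm P \<le> (1 + \<bar>\<alpha>\<bar>) * ns"
      proof -
        have "norm P \<le> norm f1 + norm (a *\<^sub>C f2)" unfolding P_def by (rule norm_triangle_ineq4)
        also have "\<dots> = norm f1 + \<bar>\<alpha>\<bar> * norm f2" by (simp add: norm_scaleC ca)
        also have "\<dots> \<le> ns + \<bar>\<alpha>\<bar> * ns" using nf1 nf2 by (simp add: add_mono mult_left_mono)
        finally show ?thesis by (simp add: algebra_simps)
      qed
      have nQ: "norm Q \<le> (1 + \<bar>\<alpha>\<bar>) * ns"
      proof -
        have "norm Q \<le> norm (a *\<^sub>C f1) + norm f2" unfolding Q_def by (rule norm_triangle_ineq)
        also have "\<dots> = \<bar>\<alpha>\<bar> * norm f1 + norm f2" by (simp add: norm_scaleC ca)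
        also have "\<dots> \<le> \<bar>\<alpha>\<bar> * ns + ns" using nf1 nf2 by (simp add: add_mono mult_left_mono)
        finally show ?thesis by (simp add: algebra_simps)
      qed
      have "\<bar>Im l\<bar> * nu\<^sup>2 = \<bar>Im (cinner x P + cinner y Q)\<bar>"
        using id nsq by (simp add: abs_mult)
      also have "\<dots> \<le> cmod (cinner x P + cinner y Q)" by (rule abs_Im_le_cmod)
      also have "\<dots> \<le> cmod (cinner x P) + cmod (cinner y Q)" by (rule norm_triangle_ineq)
      also have "\<dots> \<le> norm x * norm P + norm y * norm Q" by (intro add_mono cauchy_schwarz)
      also have "\<dots> \<le> nu * ((1 + \<bar>\<alpha>\<bar>) * ns) + nu * ((1 + \<bar>\<alpha>\<bar>) * ns)"
        by (intro add_mono mult_mono nx ny nP nQ) (auto simp: nu0)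
      finally have main: "\<bar>Im l\<bar> * nu\<^sup>2 \<le> nu * (2 * (1 + \<bar>\<alpha>\<bar>) * ns)"
        by (simp add: algebra_simps)
      show "norm u \<le> K * norm (S u)"
      proof (cases "nu = 0")
        case True then show ?thesis using ns0 Iml unfolding K_def nu_def[symmetric] ns_def[symmetric]
          by simp
      next
        case False
        then have "nu > 0" using nu0 by simp
        have m2: "nu * (\<bar>Im l\<bar> * nu) \<le> nu * (2 * (1 + \<bar>\<alpha>\<bar>) * ns)"
          using main by (simp add: power2_eq_square ac_simps)
        have "\<bar>Im l\<bar> * nu \<le> 2 * (1 + \<bar>\<alpha>\<bar>) * ns"
          by (rule mult_left_le_imp_le[OF m2 \<open>nu > 0\<close>])
        then have "nu \<le> 2 * (1 + \<bar>\<alpha>\<bar>) * ns / \<bar>Im l\<bar>"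
          using Iml by (simp add: pos_le_divide_eq mult.commute)
        then show ?thesis unfolding K_def nu_def ns_def by simp
      qed
    qed
    have closed: "u0 \<in> D \<times> D \<and> S u0 = g"
      if uD: "\<forall>n. u n \<in> D \<times> D" and uu: "u \<longlonglongrightarrow> u0" and Sg: "(\<lambda>n. S (u n)) \<longlonglongrightarrow> g"
      for u u0 g
    proof -
      define k where "k = 1 + a * a"
      have k0: "k \<noteq> 0" unfolding k_def a_def
        by (metis of_real_1 of_real_add of_real_eq_0_iff of_real_mult not_sum_power2_lt_zero
            power2_eq_square add.commute zero_less_one less_add_same_cancel2 le_less_trans
            zero_le_square order.strict_iff_not)
      define c where "c = inverse k"
      have ck: "c * k = 1" using k0 unfolding c_def by simp
      have Aform: "A x = c *\<^sub>C (fst (S (x, y)) - a *\<^sub>C snd (S (x, y)) + l *\<^sub>C x - (a * l) *\<^sub>C y)"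
        if "x \<in> D" "y \<in> D" for x y
      proof -
        have "fst (S (x, y)) - a *\<^sub>C snd (S (x, y)) + l *\<^sub>C x - (a * l) *\<^sub>C y = k *\<^sub>C A x"
          unfolding k_def by (simp add: Spair algebra_simps scaleC_one)
        then show ?thesis using ck by (simp add: scaleC_one)
      qed
      have Bform: "B y = c *\<^sub>C (a *\<^sub>C fst (S (x, y)) + snd (S (x, y)) + (a * l) *\<^sub>C x + l *\<^sub>C y)"
        if "x \<in> D" "y \<in> D" for x y
      proof -
        have "a *\<^sub>C fst (S (x, y)) + snd (S (x, y)) + (a * l) *\<^sub>C x + l *\<^sub>C y = k *\<^sub>C B y"
          unfolding k_def by (simp add: Spair algebra_simps scaleC_one)
        then show ?thesis using ck by (simp add: scaleC_one)
      qed
      define xs where "xs n = fst (u n)" for n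
      define ys where "ys n = snd (u n)" for n
      have xsD: "xs n \<in> D" and ysD: "ys n \<in> D" for n
        using uD unfolding xs_def ys_def by (auto simp: mem_Times_iff)
      have un: "u n = (xs n, ys n)" for n unfolding xs_def ys_def by simp
      have xl: "xs \<longlonglongrightarrow> fst u0" unfolding xs_def by (intro tendsto_fst uu)
      have yl: "ys \<longlonglongrightarrow> snd u0" unfolding ys_def by (intro tendsto_snd uu)
      have f1l: "(\<lambda>n. fst (S (u n))) \<longlonglongrightarrow> fst g" by (intro tendsto_fst Sg)
      have f2l: "(\<lambda>n. snd (S (u n))) \<longlonglongrightarrow> snd g" by (intro tendsto_snd Sg)
      define aa where "aa = c *\<^sub>C (fst g - a *\<^sub>C snd g + l *\<^sub>C fst u0 - (a * l) *\<^sub>C snd u0)"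
      define bb where "bb = c *\<^sub>C (a *\<^sub>C fst g + snd g + (a * l) *\<^sub>C fst u0 + l *\<^sub>C snd u0)"
      have Al: "(\<lambda>n. A (xs n)) \<longlonglongrightarrow> aa"
      proof -
        have "(\<lambda>n. c *\<^sub>C (fst (S (u n)) - a *\<^sub>C snd (S (u n)) + l *\<^sub>C xs n - (a * l) *\<^sub>C ys n))
              \<longlonglongrightarrow> aa"
          unfolding aa_def by (intro tendsto_scaleC tendsto_add tendsto_diff f1l f2l xl yl)
        moreover have "(\<lambda>n. c *\<^sub>C (fst (S (u n)) - a *\<^sub>C snd (S (u n)) + l *\<^sub>C xs n - (a * l) *\<^sub>C ys n))
              = (\<lambda>n. A (xs n))"
          using Aform[OF xsD ysD] unfolding un by simp
        ultimately show ?thesis by simp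
      qed
      have Bl: "(\<lambda>n. B (ys n)) \<longlonglongrightarrow> bb"
      proof -
        have "(\<lambda>n. c *\<^sub>C (a *\<^sub>C fst (S (u n)) + snd (S (u n)) + (a * l) *\<^sub>C xs n + l *\<^sub>C ys n))
              \<longlonglongrightarrow> bb"
          unfolding bb_def by (intro tendsto_scaleC tendsto_add tendsto_diff f1l f2l xl yl)
        moreover have "(\<lambda>n. c *\<^sub>C (a *\<^sub>C fst (S (u n)) + snd (S (u n)) + (a * l) *\<^sub>C xs n + l *\<^sub>C ys n))
              = (\<lambda>n. B (ys n))"
          using Bform[OF xsD ysD] unfolding un by simp
        ultimately show ?thesis by simp
      qed
      have x0: "fst u0 \<in> D" "A (fst u0) = aa" using sa_closed[OF dense saA _ xl Al] xsD by auto
      have y0: "snd u0 \<in> D" "B (snd u0) = bb" using sa_closed[OF dense saB _ yl Bl] ysD by auto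
      have "(\<lambda>n. S (u n)) \<longlonglongrightarrow> (aa + a *\<^sub>C bb - l *\<^sub>C fst u0, - (a *\<^sub>C aa) + bb - l *\<^sub>C snd u0)"
      proof -
        have "(\<lambda>n. (A (xs n) + a *\<^sub>C B (ys n) - l *\<^sub>C xs n, - (a *\<^sub>C A (xs n)) + B (ys n) - l *\<^sub>C ys n))
             \<longlonglongrightarrow> (aa + a *\<^sub>C bb - l *\<^sub>C fst u0, - (a *\<^sub>C aa) + bb - l *\<^sub>C snd u0)"
          by (intro tendsto_Pair tendsto_add tendsto_diff tendsto_minus tendsto_scaleC Al Bl xl yl)
        then show ?thesis unfolding un Spair .
      qed
      then have "g = (aa + a *\<^sub>C bb - l *\<^sub>C fst u0, - (a *\<^sub>C aa) + bb - l *\<^sub>C snd u0)"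
        using Sg LIMSEQ_unique by blast
      also have "\<dots> = S u0" using Spair[of "fst u0" "snd u0"] x0 y0 by simp
      finally show ?thesis using x0 y0 by (simp add: mem_Times_iff)
    qed
    have adj: "w = 0" if hw: "\<forall>v\<in>D \<times> D. cinner (S v) w = 0" for w
    proof -
      obtain w1 w2 where w: "w = (w1, w2)" by (cases w)
      define p where "p = w1 - a *\<^sub>C w2"
      define q where "q = a *\<^sub>C w1 + w2"
      have hp: "cinner (A x) p = cinner x (cnj l *\<^sub>C w1)" if x: "x \<in> D" for x
      proof -
        have "cinner (S (x, 0)) w = 0" using hw x D0 by auto
        then have "cinner (A x - l *\<^sub>C x) w1 + cinner (- (a *\<^sub>C A x)) w2 = 0"
          by (simp add: Spair B0 w cinner_Pair)
        then show ?thesis unfolding p_def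
          by (simp add: cinner_simps cnja algebra_simps)
      qed
      have hq: "cinner (B y) q = cinner y (cnj l *\<^sub>C w2)" if y: "y \<in> D" for y
      proof -
        have "cinner (S (0, y)) w = 0" using hw y D0 by auto
        then have "cinner (a *\<^sub>C B y) w1 + cinner (B y - l *\<^sub>C y) w2 = 0"
          by (simp add: Spair A0 w cinner_Pair)
        then show ?thesis unfolding q_def
          by (simp add: cinner_simps cnja algebra_simps)
      qed
      have pD: "p \<in> D" using saA hp unfolding self_adjoint_on_def adj_domain_def by blast
      have qD: "q \<in> D" using saB hq unfolding self_adjoint_on_def adj_domain_def by blast
      have Ap: "A p = cnj l *\<^sub>C w1"
      proof -
        have "\<forall>z\<in>D. cinner z (A p - cnj l *\<^sub>C w1) = 0"
          using hp saA pD by (auto simp: self_adjoint_on_def cinner_diff_right)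
        then have "A p - cnj l *\<^sub>C w1 = 0" by (rule dense_zero[OF dense])
        then show ?thesis by simp
      qed
      have Bq: "B q = cnj l *\<^sub>C w2"
      proof -
        have "\<forall>z\<in>D. cinner z (B q - cnj l *\<^sub>C w2) = 0"
          using hq saB qD by (auto simp: self_adjoint_on_def cinner_diff_right)
        then have "B q - cnj l *\<^sub>C w2 = 0" by (rule dense_zero[OF dense])
        then show ?thesis by simp
      qed
      have "Im (cinner p (A p) + cinner q (B q)) = 0"
        using sa_real[OF saA pD] sa_real[OF saB qD] by simp
      moreover have "cinner p (A p) + cinner q (B q) = cinner (w1 - complex_of_real \<alpha> *\<^sub>C w2) (cnj l *\<^sub>C w1)
           + cinner (complex_of_real \<alpha> *\<^sub>C w1 + w2) (cnj l *\<^sub>C w2)"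
        unfolding Ap Bq by (simp add: p_def q_def a_def)
      ultimately have "- Im l * ((norm w1)\<^sup>2 + (norm w2)\<^sup>2) = 0"
        using adj_identity[OF Rel, of w1 \<alpha> w2] by simp
      then have "(norm w1)\<^sup>2 + (norm w2)\<^sup>2 = 0" using Iml by simp
      then have "w1 = 0" "w2 = 0"
        by (simp_all add: add_nonneg_eq_0_iff)
      then show ?thesis using w by (simp add: zero_prod_def)
    qed
    have surj: "S ` (D \<times> D) = UNIV"
      by (rule closed_range_surj[OF sub lin bound closed adj]) auto
    have inj: "inj_on S (D \<times> D)"
    proof (rule inj_onI)
      fix u v assume uv: "u \<in> D \<times> D" "v \<in> D \<times> D" "S u = S v"
      have "u - v \<in> D \<times> D" unfolding diff_as_lin by (rule csub_lin[OF sub uv(1,2)])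
      moreover have "S (u - v) = S u - S v" unfolding diff_as_lin by (rule clin_lin[OF sub lin uv(1,2)])
      ultimately have "norm (u - v) \<le> K * norm (S u - S v)" using bound by metis
      then show "u = v" using uv(3) by simp
    qed
    have "bij_betw (\<lambda>x. T x - l *\<^sub>C x) (D \<times> D) UNIV"
      using inj surj unfolding bij_betw_def S_def by simp
    moreover have "\<exists>C. \<forall>x\<in>D \<times> D. norm x \<le> C * norm (T x - l *\<^sub>C x)"
      using bound unfolding S_def by blast
    ultimately show False using lsp unfolding op_spectrum_def by blast
  qed
qed

end
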